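(* Let $\mathcal{C}\subseteq\mathbb{F}^n$ be an $\mathbb{F}$-linear code of dimension $k$ and $\mathcal{L}\in\mathcal{P}(\mathbf{K}^{\mathbf{n}})$. Then $\mu_{\mathcal{C}}(\mathcal{L})+\rho_{\mathcal{C}}(\mathcal{L})=n-k$.
   Context: Setting: $\ell,n_1,\dots,n_\ell$ positive integers, $K_1,\dots,K_\ell$ finite fields with a common finite extension $\mathbb{F}$, $m_i=[\mathbb{F}:K_i]$, $n=\sum n_i$. $\mathcal{P}(\mathbf{K}^{\mathbf{n}})=\mathcal{P}(K_1^{n_1})\times\cdots\times\mathcal{P}(K_\ell^{n_\ell})$, $\mathcal{P}(K_i^{n_i})$ the lattice of $K_i$-subspaces of $K_i^{n_i}$, with componentwise inclusion and orthogonal complements (standard bilinear form). For $\mathbf{c}=(\mathbf{c}^{(1)},\dots,\mathbf{c}^{(\ell)})\in\mathbb{F}^n$, $\mathbf{c}^{(i)}\in\mathbb{F}^{n_i}$, let $\Gamma_i(\mathbf{c}^{(i)})$ be the $m_i\times n_i$ matrix over $K_i$ whose columns are the coordinate vectors of the entries of $\mathbf{c}^{(i)}$ w.r.t. a fixed basis of $\mathbb{F}/K_i$, and $\mathrm{supp}(\mathbf{c})=(E_1,\dots,E_\ell)$ with $E_i$ the row space of $\Gamma_i(\mathbf{c}^{(i)})$. $\mathcal{C}^\perp$ is the dual of $\mathcal{C}$ in $\mathbb{F}^n$. Define $\mathcal{C}(\mathcal{L})=\{\mathbf{c}\in\mathcal{C}^\perp:\mathrm{supp}(\mathbf{c})\subseteq\mathcal{L}^\perp\}$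 and $\mu_{\mathcal{C}}(\mathcal{L})=\dim_{\mathbb{F}}\mathcal{C}(\mathcal{L})$. For $\mathcal{L}=(\mathcal{L}_1,\dots,\mathcal{L}_\ell)$ with $N_i=\dim_{K_i}\mathcal{L}_i$, $N=\sum N_i$, let $\mathbf{A}_i$ be an $N_i\times n_i$ generator matrix of $\mathcal{L}_i$ over $K_i$, $\mathbf{A}=\mathrm{diag}(\mathbf{A}_1,\dots,\mathbf{A}_\ell)$, and $\Pi_{\mathcal{L}}:\mathbb{F}^n\to\mathbb{F}^N$, $\mathbf{x}\mapsto\mathbf{x}\mathbf{A}^T$. Define $\mathcal{C}_{\mathcal{L}}=\Pi_{\mathcal{L}}(\mathcal{C}^\perp)$ and $\rho_{\mathcal{C}}(\mathcal{L})=\dim_{\mathbb{F}}\mathcal{C}_{\mathcal{L}}$. *)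

theory Defs
  imports Complex_Main "HOL-Library.Function_Algebras"
begin

(* Ambient field F: a finite field type 'a. The fields K_i are subfields of F. *)
definition subfield :: "'a::field set \<Rightarrow> bool" where
  "subfield K \<longleftrightarrow> 0 \<in> K \<and> 1 \<in> K \<and>
     (\<forall>x\<in>K. \<forall>y\<in>K. x + y \<in> K \<and> x * y \<in> K) \<and>
     (\<forall>x\<in>K. - x \<in> K \<and> inverse x \<in> K)"

definition Kvec :: "'a::field set \<Rightarrow> nat \<Rightarrow> (nat \<Rightarrow> 'a) set" where
  "Kvec K m = {v. (\<forall>j. v j \<in> K) \<and> (\<forall>j\<ge>m. v j = 0)}"

definition Ksubspace :: "'a::field set \<Rightarrow> nat \<Rightarrow> (nat \<Rightarrow> 'a) set \<Rightarrow> bool" where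
  "Ksubspace K m V \<longleftrightarrow> V \<subseteq> Kvec K m \<and> (\<lambda>j. 0) \<in> V \<and>
     (\<forall>u\<in>V. \<forall>v\<in>V. (\<lambda>j. u j + v j) \<in> V) \<and>
     (\<forall>c\<in>K. \<forall>v\<in>V. (\<lambda>j. c * v j) \<in> V)"

definition Korth :: "'a::field set \<Rightarrow> nat \<Rightarrow> (nat \<Rightarrow> 'a) set \<Rightarrow> (nat \<Rightarrow> 'a) set" where
  "Korth K m V = {w \<in> Kvec K m. \<forall>v\<in>V. (\<Sum>j<m. w j * v j) = 0}"

definition is_Kbasis_F :: "'a::field set \<Rightarrow> (nat \<Rightarrow> 'a) \<Rightarrow> nat \<Rightarrow> bool" where
  "is_Kbasis_F K b m \<longleftrightarrow>
     (\<forall>a. (\<forall>r. a r \<in> K) \<longrightarrow> (\<Sum>r<m. a r * b r) = 0 \<longrightarrow> (\<forall>r<m. a r = 0)) \<and>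
     (\<forall>x. \<exists>a. (\<forall>r. a r \<in> K) \<and> x = (\<Sum>r<m. a r * b r))"

definition coord :: "'a::field set \<Rightarrow> (nat \<Rightarrow> 'a) \<Rightarrow> nat \<Rightarrow> 'a \<Rightarrow> nat \<Rightarrow> 'a" where
  "coord K b m x = (THE a. (\<forall>r. a r \<in> K) \<and> (\<forall>r\<ge>m. a r = 0) \<and> x = (\<Sum>r<m. a r * b r))"

definition Gamma :: "'a::field set \<Rightarrow> (nat \<Rightarrow> 'a) \<Rightarrow> nat \<Rightarrow> nat \<Rightarrow> (nat \<Rightarrow> 'a) \<Rightarrow> nat \<Rightarrow> nat \<Rightarrow> 'a" where
  "Gamma K b m nn v = (\<lambda>r j. if r < m \<and> j < nn then coord K b m (v j) r else 0)"

definition rowspace :: "'a::field set \<Rightarrow> nat \<Rightarrow> (nat \<Rightarrow> nat \<Rightarrow> 'a) \<Rightarrow> (nat \<Rightarrow> 'a) set" where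
  "rowspace K m G = {w. \<exists>a. (\<forall>r. a r \<in> K) \<and> w = (\<lambda>j. \<Sum>r<m. a r * G r j)}"

(* Coordinates of F^n, n = sum n_i, are indexed by pairs (i,j), i < l, j < n_i *)
definition Idx :: "nat \<Rightarrow> (nat \<Rightarrow> nat) \<Rightarrow> (nat \<times> nat) set" where
  "Idx l nn = {(i, j). i < l \<and> j < nn i}"

definition Fvec :: "nat \<Rightarrow> (nat \<Rightarrow> nat) \<Rightarrow> (nat \<times> nat \<Rightarrow> 'a::field) set" where
  "Fvec l nn = {x. \<forall>p. p \<notin> Idx l nn \<longrightarrow> x p = 0}"

definition block :: "(nat \<times> nat \<Rightarrow> 'a) \<Rightarrow> nat \<Rightarrow> nat \<Rightarrow> 'a" where
  "block x i = (\<lambda>j. x (i, j))"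

definition Fsubspace :: "('b \<Rightarrow> 'a::field) set \<Rightarrow> ('b \<Rightarrow> 'a) set \<Rightarrow> bool" where
  "Fsubspace S U \<longleftrightarrow> S \<subseteq> U \<and> (\<lambda>p. 0) \<in> S \<and>
     (\<forall>u\<in>S. \<forall>v\<in>S. (\<lambda>p. u p + v p) \<in> S) \<and>
     (\<forall>c. \<forall>v\<in>S. (\<lambda>p. c * v p) \<in> S)"

definition fscale :: "'a::field \<Rightarrow> ('b \<Rightarrow> 'a) \<Rightarrow> 'b \<Rightarrow> 'a" where
  "fscale c x = (\<lambda>p. c * x p)"

definition Fdim :: "('b \<Rightarrow> 'a::field) set \<Rightarrow> nat" where
  "Fdim S = vector_space.dim fscale S"

definition dual :: "nat \<Rightarrow> (nat \<Rightarrow> nat) \<Rightarrow> (nat \<times> nat \<Rightarrow> 'a::field) set \<Rightarrow> (nat \<times> nat \<Rightarrow> 'a) set" where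
  "dual l nn C = {x \<in> Fvec l nn. \<forall>c\<in>C. (\<Sum>p\<in>Idx l nn. x p * c p) = 0}"

definition supp_i :: "(nat \<Rightarrow> 'a::field set) \<Rightarrow> (nat \<Rightarrow> nat \<Rightarrow> 'a) \<Rightarrow> (nat \<Rightarrow> nat) \<Rightarrow> (nat \<Rightarrow> nat)
    \<Rightarrow> (nat \<times> nat \<Rightarrow> 'a) \<Rightarrow> nat \<Rightarrow> (nat \<Rightarrow> 'a) set" where
  "supp_i K B m nn c i = rowspace (K i) (m i) (Gamma (K i) (B i) (m i) (nn i) (block c i))"

definition CL :: "nat \<Rightarrow> (nat \<Rightarrow> nat) \<Rightarrow> (nat \<Rightarrow> 'a::field set) \<Rightarrow> (nat \<Rightarrow> nat \<Rightarrow> 'a) \<Rightarrow> (nat \<Rightarrow> nat)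
    \<Rightarrow> (nat \<times> nat \<Rightarrow> 'a) set \<Rightarrow> (nat \<Rightarrow> (nat \<Rightarrow> 'a) set) \<Rightarrow> (nat \<times> nat \<Rightarrow> 'a) set" where
  "CL l nn K B m C L = {c \<in> dual l nn C. \<forall>i<l. supp_i K B m nn c i \<subseteq> Korth (K i) (nn i) (L i)}"

definition mu :: "nat \<Rightarrow> (nat \<Rightarrow> nat) \<Rightarrow> (nat \<Rightarrow> 'a::field set) \<Rightarrow> (nat \<Rightarrow> nat \<Rightarrow> 'a) \<Rightarrow> (nat \<Rightarrow> nat)
    \<Rightarrow> (nat \<times> nat \<Rightarrow> 'a) set \<Rightarrow> (nat \<Rightarrow> (nat \<Rightarrow> 'a) set) \<Rightarrow> nat" where
  "mu l nn K B m C L = Fdim (CL l nn K B m C L)"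

definition is_gen_matrix :: "'a::field set \<Rightarrow> nat \<Rightarrow> (nat \<Rightarrow> 'a) set \<Rightarrow> nat \<Rightarrow> (nat \<Rightarrow> nat \<Rightarrow> 'a) \<Rightarrow> bool" where
  "is_gen_matrix K m V N A \<longleftrightarrow>
     (\<forall>r<N. A r \<in> Kvec K m) \<and> (\<forall>r\<ge>N. \<forall>j. A r j = 0) \<and>
     (\<forall>a. (\<forall>r. a r \<in> K) \<longrightarrow> (\<lambda>j. \<Sum>r<N. a r * A r j) = (\<lambda>j. 0) \<longrightarrow> (\<forall>r<N. a r = 0)) \<and>
     V = rowspace K N A"

(* Pi_L : F^n \<rightarrow> F^N, x \<mapsto> x A^T with A = diag(A_1,..,A_l); F^N indexed by (i,r), r < N_i *)
definition PiL :: "nat \<Rightarrow> (nat \<Rightarrow> nat) \<Rightarrow> (nat \<Rightarrow> nat) \<Rightarrow> (nat \<Rightarrow> nat \<Rightarrow> nat \<Rightarrow> 'a::field)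
    \<Rightarrow> (nat \<times> nat \<Rightarrow> 'a) \<Rightarrow> nat \<times> nat \<Rightarrow> 'a" where
  "PiL l nn N A x = (\<lambda>(i, r). if i < l \<and> r < N i then (\<Sum>j<nn i. x (i, j) * A i r j) else 0)"

definition rho :: "nat \<Rightarrow> (nat \<Rightarrow> nat) \<Rightarrow> (nat \<Rightarrow> nat) \<Rightarrow> (nat \<Rightarrow> nat \<Rightarrow> nat \<Rightarrow> 'a::field)
    \<Rightarrow> (nat \<times> nat \<Rightarrow> 'a) set \<Rightarrow> nat" where
  "rho l nn N A C = Fdim (PiL l nn N A ` dual l nn C)"

end

theory Submission
  imports Defs "HOL-Library.FuncSet"
begin

interpretation fs: vector_space "fscale :: 'a::field \<Rightarrow> ('b \<Rightarrow> 'a) \<Rightarrow> ('b \<Rightarrow> 'a)"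
  by unfold_locales (auto simp: fscale_def fun_eq_iff algebra_simps)

lemma Fdim_eq: "Fdim S = fs.dim S"
  by (simp add: Fdim_def)

lemma Fsubspace_subspace: "Fsubspace S U \<Longrightarrow> fs.subspace S"
  unfolding Fsubspace_def fs.subspace_def
  by (auto simp: fscale_def zero_fun_def plus_fun_def)

lemma card_span_basis:
  fixes B :: "('b \<Rightarrow> 'a::{field,finite}) set"
  assumes fin: "finite B" and ind: "fs.independent B"
  shows "card (fs.span B) = card (UNIV::'a set) ^ card B"
proof -
  let ?h = "\<lambda>g. \<Sum>v\<in>B. fscale (g v) v"
  have "bij_betw ?h (B \<rightarrow>\<^sub>E (UNIV::'a set)) (fs.span B)"
  proof (rule bij_betwI')
    fix x y assume x: "x \<in> B \<rightarrow>\<^sub>E (UNIV::'a set)" and y: "y \<in> B \<rightarrow>\<^sub>E (UNIV::'a set)"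
    show "(?h x = ?h y) = (x = y)"
    proof
      assume e: "?h x = ?h y"
      have "(\<Sum>v\<in>B. fscale (x v - y v) v) = ?h x - ?h y"
        by (simp add: fs.scale_left_diff_distrib sum_subtractf)
      also have "\<dots> = 0" using e by simp
      finally have s0: "(\<Sum>v\<in>B. fscale (x v - y v) v) = 0" .
      have H: "\<forall>u. \<not>((\<exists>v\<in>B. u v \<noteq> 0) \<and> (\<Sum>v\<in>B. fscale (u v) v) = 0)"
        using ind unfolding fs.dependent_finite[OF fin] by blast
      have "\<forall>v\<in>B. x v - y v = 0"
        using spec[OF H, of "\<lambda>v. x v - y v"] s0 by blast
      then show "x = y" using x y by (intro PiE_ext[OF x y]) simp
    qed simp
  next
    fix x assume "x \<in> B \<rightarrow>\<^sub>E (UNIV::'a set)"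
    then show "?h x \<in> fs.span B" using fs.span_finite[OF fin] by auto
  next
    fix z assume "z \<in> fs.span B"
    then obtain u where u: "z = (\<Sum>v\<in>B. fscale (u v) v)" using fs.span_finite[OF fin] by auto
    have "restrict u B \<in> B \<rightarrow>\<^sub>E UNIV" by simp
    moreover have "z = ?h (restrict u B)" unfolding u by (rule sum.cong) auto
    ultimately show "\<exists>x\<in>B \<rightarrow>\<^sub>E UNIV. z = ?h x" by blast
  qed
  then have "card (fs.span B) = card (B \<rightarrow>\<^sub>E (UNIV::'a set))"
    by (rule bij_betw_same_card[symmetric])
  also have "\<dots> = card (UNIV::'a set) ^ card B" by (simp add: card_PiE fin)
  finally show ?thesis .
qed

lemma card_Fdim:
  fixes S :: "('b \<Rightarrow> 'a::{field,finite}) set"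
  assumes "Fsubspace S U" and "finite S"
  shows "card S = card (UNIV::'a set) ^ Fdim S"
proof -
  obtain B where B: "B \<subseteq> S" "fs.independent B" "S \<subseteq> fs.span B" "card B = fs.dim S"
    using fs.basis_exists by blast
  have fin: "finite B" using B(1) assms(2) finite_subset by blast
  have "fs.span B = S"
    using fs.span_subspace[OF B(1) B(3) Fsubspace_subspace[OF assms(1)]] .
  then show ?thesis using card_span_basis[OF fin B(2)] B(4) by (simp add: Fdim_eq)
qed

lemma subfield_sum:
  assumes K: "subfield K" and f: "\<And>x. x \<in> S \<Longrightarrow> f x \<in> K"
  shows "sum f S \<in> K"
proof (cases "finite S")
  case True
  then show ?thesis using f
    by (induction S rule: finite_induct) (use K in \<open>auto simp: subfield_def\<close>)
next
  case False then show ?thesis using K by (simp add: subfield_def)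
qed

lemma subfield_mult: "subfield K \<Longrightarrow> x \<in> K \<Longrightarrow> y \<in> K \<Longrightarrow> x * y \<in> K"
  by (simp add: subfield_def)

lemma subfield_diff: "subfield K \<Longrightarrow> x \<in> K \<Longrightarrow> y \<in> K \<Longrightarrow> x - y \<in> K"
  unfolding subfield_def by (metis diff_conv_add_uminus)

lemma coord_props:
  assumes K: "subfield K" and bas: "is_Kbasis_F K b M"
  shows "(\<forall>r. coord K b M x r \<in> K) \<and> (\<forall>r\<ge>M. coord K b M x r = 0) \<and>
         x = (\<Sum>r<M. coord K b M x r * b r)"
proof -
  let ?P = "\<lambda>a. (\<forall>r. a r \<in> K) \<and> (\<forall>r\<ge>M. a r = 0) \<and> x = (\<Sum>r<M. a r * b r)"
  obtain a where a: "\<forall>r. a r \<in> K" "x = (\<Sum>r<M. a r * b r)"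
    using bas unfolding is_Kbasis_F_def by blast
  let ?a = "\<lambda>r. if r < M then a r else 0"
  have pa: "?P ?a" using a K by (auto simp: subfield_def intro!: sum.cong)
  have uniq: "a1 = a2" if "?P a1" "?P a2" for a1 a2
  proof -
    have "(\<Sum>r<M. (a1 r - a2 r) * b r) = 0"
      using that by (simp add: algebra_simps sum_subtractf)
    moreover have "\<forall>r. a1 r - a2 r \<in> K" using that K subfield_diff by blast
    moreover have I: "\<forall>a. (\<forall>r. a r \<in> K) \<longrightarrow> (\<Sum>r<M. a r * b r) = 0 \<longrightarrow> (\<forall>r<M. a r = 0)"
      using bas unfolding is_Kbasis_F_def by blast
    ultimately have "\<forall>r<M. a1 r - a2 r = 0"
      using spec[OF I, of "\<lambda>r. a1 r - a2 r"] by blast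
    then show ?thesis using that by (metis eq_iff_diff_eq_0 not_le ext)
  qed
  have "\<exists>!a. ?P a"
  proof (rule ex1I[of ?P ?a])
    show "?P ?a" by (rule pa)
    show "a' = ?a" if "?P a'" for a' using uniq[OF that pa] .
  qed
  from theI'[OF this] show ?thesis unfolding coord_def .
qed


lemma sum_indicator_mult:
  fixes f :: "nat \<Rightarrow> 'a::comm_ring_1"
  assumes "r < n"
  shows "(\<Sum>s<n. (if s = r then 1 else 0) * f s) = f r"
proof -
  have "(\<Sum>s<n. (if s = r then 1 else 0) * f s) = (\<Sum>s<n. if s = r then f s else 0)"
    by (rule sum.cong) auto
  also have "\<dots> = f r" using assms by (simp add: sum.delta)
  finally show ?thesis .
qed

lemma row_in_rowspace:
  fixes A :: "nat \<Rightarrow> nat \<Rightarrow> 'a::field"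
  assumes K: "subfield K" and r: "r < N"
  shows "A r \<in> rowspace K N A"
proof -
  let ?a = "\<lambda>s. if s = r then (1::'a) else 0"
  have e1: "A r = (\<lambda>j. \<Sum>s<N. ?a s * A s j)"
    by (simp add: fun_eq_iff sum_indicator_mult[OF r])
  have e2: "\<forall>s. ?a s \<in> K" using K by (simp add: subfield_def)
  have "\<exists>a. (\<forall>s. a s \<in> K) \<and> A r = (\<lambda>j. \<Sum>s<N. a s * A s j)"
    by (rule exI[of _ ?a]) (use e1 e2 in simp)
  then show ?thesis by (simp add: rowspace_def)
qed

lemma core_i:
  fixes K :: "'a::field set" and b :: "nat \<Rightarrow> 'a" and c' :: "nat \<Rightarrow> 'a"
    and AA :: "nat \<Rightarrow> nat \<Rightarrow> 'a"
  assumes K: "subfield K" and bas: "is_Kbasis_F K b M"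
    and gm: "is_gen_matrix K n' Lset Nn AA"
  shows "rowspace K M (Gamma K b M n' c') \<subseteq> Korth K n' Lset \<longleftrightarrow>
         (\<forall>r<Nn. (\<Sum>j<n'. c' j * AA r j) = 0)"
proof -
  define G where "G = Gamma K b M n' c'"
  have Gdef: "G \<rho> j = (if \<rho> < M \<and> j < n' then coord K b M (c' j) \<rho> else 0)" for \<rho> j
    by (simp add: G_def Gamma_def)
  have GK: "G \<rho> j \<in> K" for \<rho> j
    using coord_props[OF K bas] K by (auto simp: Gdef subfield_def)
  have AK: "AA r j \<in> K" if "r < Nn" for r j
    using gm that by (auto simp: is_gen_matrix_def Kvec_def)
  have Lrow: "Lset = rowspace K Nn AA" using gm by (simp add: is_gen_matrix_def)
  have cexp: "c' j = (\<Sum>\<rho><M. G \<rho> j * b \<rho>)" if "j < n'" for j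
  proof -
    have "c' j = (\<Sum>\<rho><M. coord K b M (c' j) \<rho> * b \<rho>)"
      using coord_props[OF K bas, of "c' j"] by blast
    also have "\<dots> = (\<Sum>\<rho><M. G \<rho> j * b \<rho>)"
      by (rule sum.cong) (use that in \<open>auto simp: Gdef\<close>)
    finally show ?thesis .
  qed
  have key: "(\<Sum>j<n'. c' j * AA r j) = (\<Sum>\<rho><M. (\<Sum>j<n'. G \<rho> j * AA r j) * b \<rho>)" for r
  proof -
    have "(\<Sum>j<n'. c' j * AA r j) = (\<Sum>j<n'. \<Sum>\<rho><M. G \<rho> j * b \<rho> * AA r j)"
      by (rule sum.cong) (simp_all add: cexp sum_distrib_right)
    also have "\<dots> = (\<Sum>\<rho><M. \<Sum>j<n'. G \<rho> j * b \<rho> * AA r j)" by (rule sum.swap)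
    also have "\<dots> = (\<Sum>\<rho><M. (\<Sum>j<n'. G \<rho> j * AA r j) * b \<rho>)"
      by (intro sum.cong refl) (simp only: sum_distrib_right, intro sum.cong refl, simp add: mult_ac)
    finally show ?thesis .
  qed
  show ?thesis unfolding G_def[symmetric]
  proof
    assume sub: "rowspace K M G \<subseteq> Korth K n' Lset"
    show "\<forall>r<Nn. (\<Sum>j<n'. c' j * AA r j) = 0"
    proof (intro allI impI)
      fix r assume r: "r < Nn"
      have Ar: "AA r \<in> Lset" unfolding Lrow by (rule row_in_rowspace[OF K r])
      have z: "(\<Sum>j<n'. G \<rho> j * AA r j) = 0" for \<rho>
      proof (cases "\<rho> < M")
        case True
        have "G \<rho> \<in> rowspace K M G" by (rule row_in_rowspace[OF K True])
        then have "G \<rho> \<in> Korth K n' Lset" using sub by blast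
        then show ?thesis using Ar by (simp add: Korth_def)
      next
        case False
        then show ?thesis by (simp add: Gdef)
      qed
      show "(\<Sum>j<n'. c' j * AA r j) = 0" by (simp add: key z)
    qed
  next
    assume orth: "\<forall>r<Nn. (\<Sum>j<n'. c' j * AA r j) = 0"
    have I: "\<forall>a. (\<forall>r. a r \<in> K) \<longrightarrow> (\<Sum>r<M. a r * b r) = 0 \<longrightarrow> (\<forall>r<M. a r = 0)"
      using bas unfolding is_Kbasis_F_def by blast
    have z: "(\<Sum>j<n'. G \<rho> j * AA r j) = 0" if "\<rho> < M" "r < Nn" for \<rho> r
    proof -
      have "\<forall>\<rho>. (\<Sum>j<n'. G \<rho> j * AA r j) \<in> K"
        by (intro allI subfield_sum[OF K] subfield_mult[OF K] GK AK[OF that(2)])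
      moreover have "(\<Sum>\<rho><M. (\<Sum>j<n'. G \<rho> j * AA r j) * b \<rho>) = 0"
        using key orth that by simp
      ultimately show ?thesis
        using spec[OF I, of "\<lambda>\<rho>. (\<Sum>j<n'. G \<rho> j * AA r j)"] that by blast
    qed
    show "rowspace K M G \<subseteq> Korth K n' Lset"
    proof
      fix w assume "w \<in> rowspace K M G"
      then obtain \<alpha> where \<alpha>: "\<forall>r. \<alpha> r \<in> K" "w = (\<lambda>j. \<Sum>\<rho><M. \<alpha> \<rho> * G \<rho> j)"
        by (auto simp: rowspace_def)
      have "w \<in> Kvec K n'"
        unfolding Kvec_def
      proof (intro CollectI conjI allI impI)
        fix j show "w j \<in> K"
          unfolding \<alpha>(2) by (intro subfield_sum[OF K] subfield_mult[OF K] GK \<alpha>(1)[rule_format])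
      next
        fix j assume "j \<ge> n'" then show "w j = 0" by (simp add: \<alpha> Gdef)
      qed
      moreover have "(\<Sum>j<n'. w j * v j) = 0" if vL: "v \<in> Lset" for v
      proof -
        obtain \<beta> where \<beta>: "\<forall>r. \<beta> r \<in> K" "v = (\<lambda>j. \<Sum>r<Nn. \<beta> r * AA r j)"
          using vL Lrow by (auto simp: rowspace_def)
        have "(\<Sum>j<n'. w j * v j) =
              (\<Sum>j<n'. \<Sum>\<rho><M. \<Sum>r<Nn. (\<alpha> \<rho> * G \<rho> j) * (\<beta> r * AA r j))"
          unfolding \<alpha>(2) \<beta>(2) by (simp only: sum_product)
        also have "\<dots> = (\<Sum>\<rho><M. \<Sum>j<n'. \<Sum>r<Nn. (\<alpha> \<rho> * G \<rho> j) * (\<beta> r * AA r j))"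
          by (rule sum.swap)
        also have "\<dots> = (\<Sum>\<rho><M. \<Sum>r<Nn. \<Sum>j<n'. (\<alpha> \<rho> * G \<rho> j) * (\<beta> r * AA r j))"
          by (rule sum.cong[OF refl], rule sum.swap)
        also have "\<dots> = (\<Sum>\<rho><M. \<Sum>r<Nn. \<alpha> \<rho> * \<beta> r * (\<Sum>j<n'. G \<rho> j * AA r j))"
          by (intro sum.cong refl) (simp only: sum_distrib_left, intro sum.cong refl, simp add: mult_ac)
        also have "\<dots> = 0"
          by (intro sum.neutral ballI) (simp add: z)
        finally show ?thesis .
      qed
      ultimately show "w \<in> Korth K n' Lset" by (simp add: Korth_def)
    qed
  qed
qed

lemma kernel_card:
  fixes f :: "'v::ab_group_add \<Rightarrow> 'w::ab_group_add"
  assumes fin: "finite S"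
    and cl: "\<And>x y. x \<in> S \<Longrightarrow> y \<in> S \<Longrightarrow> x - y \<in> S \<and> x + y \<in> S"
    and fl: "\<And>x y. x \<in> S \<Longrightarrow> y \<in> S \<Longrightarrow> f (x + y) = f x + f y \<and> f (x - y) = f x - f y"
  shows "card S = card {x\<in>S. f x = 0} * card (f ` S)"
proof -
  let ?Ker = "{x\<in>S. f x = 0}"
  let ?g = "inv_into S f"
  let ?h = "\<lambda>(k, y). k + ?g y"
  have gS: "?g y \<in> S" if "y \<in> f ` S" for y using that by (rule inv_into_into)
  have fg: "f (?g y) = y" if "y \<in> f ` S" for y using that by (rule f_inv_into_f)
  have "bij_betw ?h (?Ker \<times> f ` S) S"
  proof (rule bij_betwI')
    fix p q assume p: "p \<in> ?Ker \<times> f ` S" and q: "q \<in> ?Ker \<times> f ` S"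
    obtain k y where kp: "p = (k, y)" by (cases p)
    obtain k' y' where kq: "q = (k', y')" by (cases q)
    show "(?h p = ?h q) = (p = q)"
    proof
      assume e: "?h p = ?h q"
      then have e': "k + ?g y = k' + ?g y'" by (simp add: kp kq)
      have "f (k + ?g y) = y" using p fl[of k "?g y"] gS fg by (auto simp: kp)
      moreover have "f (k' + ?g y') = y'" using q fl[of k' "?g y'"] gS fg by (auto simp: kq)
      ultimately have "y = y'" using e' by simp
      then show "p = q" using e' by (simp add: kp kq)
    qed simp
  next
    fix p assume p: "p \<in> ?Ker \<times> f ` S"
    then show "?h p \<in> S" using cl gS by (auto split: prod.splits)
  next
    fix x assume x: "x \<in> S"
    let ?k = "x - ?g (f x)"
    have fx: "f x \<in> f ` S" using x by simp
    have kS: "?k \<in> S" using cl[OF x gS[OF fx]] by simp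
    have "f ?k = 0" using fl[OF x gS[OF fx]] fg[OF fx] by simp
    then have "(?k, f x) \<in> ?Ker \<times> f ` S" using kS fx by simp
    moreover have "x = ?h (?k, f x)" by simp
    ultimately show "\<exists>p\<in>?Ker \<times> f ` S. x = ?h p" by blast
  qed
  then have "card (?Ker \<times> f ` S) = card S" by (rule bij_betw_same_card)
  then show ?thesis by (simp add: card_cartesian_product)
qed

lemma Fsub_zero: "Fsubspace S U \<Longrightarrow> 0 \<in> S"
  by (simp add: Fsubspace_def zero_fun_def)
lemma Fsub_add: "Fsubspace S U \<Longrightarrow> x \<in> S \<Longrightarrow> y \<in> S \<Longrightarrow> x + y \<in> S"
  by (simp add: Fsubspace_def plus_fun_def)
lemma Fsub_scale: "Fsubspace S U \<Longrightarrow> x \<in> S \<Longrightarrow> fscale c x \<in> S"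
  by (simp add: Fsubspace_def fscale_def)
lemma Fsub_diff: "Fsubspace S U \<Longrightarrow> x \<in> S \<Longrightarrow> y \<in> S \<Longrightarrow> x - y \<in> S"
proof -
  assume a: "Fsubspace S U" "x \<in> S" "y \<in> S"
  have "x - y = x + fscale (-1) y" by (simp add: fscale_def fun_eq_iff)
  then show ?thesis using a Fsub_add Fsub_scale by metis
qed

lemma functional_kernel:
  fixes S :: "('b \<Rightarrow> 'a::{field,finite}) set" and f :: "('b \<Rightarrow> 'a) \<Rightarrow> 'a"
  assumes sub: "Fsubspace S U" and fin: "finite S"
    and fadd: "\<And>x y. x \<in> S \<Longrightarrow> y \<in> S \<Longrightarrow> f (x + y) = f x + f y"
    and fsc: "\<And>c x. x \<in> S \<Longrightarrow> f (fscale c x) = c * f x"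
    and xz: "xz \<in> S" "f xz \<noteq> 0"
  shows "card S = card {x\<in>S. f x = 0} * card (UNIV::'a set)"
proof -
  have fdiff: "f (x - y) = f x - f y" if "x \<in> S" "y \<in> S" for x y
  proof -
    have e: "x - y = x + fscale (-1) y" by (simp add: fscale_def fun_eq_iff)
    have "f (x - y) = f x + f (fscale (-1) y)"
      unfolding e by (rule fadd[OF that(1) Fsub_scale[OF sub that(2)]])
    also have "\<dots> = f x - f y" using fsc[OF that(2), of "-1"] by simp
    finally show ?thesis .
  qed
  have "f ` S = UNIV"
  proof (rule set_eqI, rule iffI)
    fix t :: 'a assume "t \<in> UNIV"
    have "f (fscale (t / f xz) xz) = t" using fsc[OF xz(1)] xz(2) by simp
    then show "t \<in> f ` S" using Fsub_scale[OF sub xz(1)] by (metis image_eqI)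
  qed simp
  moreover have "card S = card {x\<in>S. f x = 0} * card (f ` S)"
    by (rule kernel_card[OF fin]) (use Fsub_add[OF sub] Fsub_diff[OF sub] fadd fdiff in auto)
  ultimately show ?thesis by simp
qed

lemma arith_dc:
  fixes q V P X :: nat
  assumes h: "q*V + (X-1)*V = q*P*X + (V-P)*X" and "X \<ge> 1" "P \<le> V" "q > 1"
  shows "V = P*X"
proof -
  obtain X' where X: "X = Suc X'" using assms(2) by (cases X) auto
  obtain W where W: "V = P + W" using assms(3) le_Suc_ex by blast
  obtain q' where q: "q = Suc q'" "q' > 0" using assms(4) by (cases q) auto
  have "Suc q' * (P + W) + X' * (P + W) = Suc q' * P * Suc X' + W * Suc X'"
    using h by (simp add: X W q)
  then have "q' * W = q' * (P * X')" by (simp add: algebra_simps)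
  then have "W = P * X'" using q(2) by simp
  then show ?thesis by (simp add: X W)
qed

lemma sum_indicator_mult':
  fixes f :: "'b \<Rightarrow> 'a::comm_ring_1"
  assumes "finite A" "r \<in> A"
  shows "(\<Sum>s\<in>A. (if s = r then 1 else 0) * f s) = f r"
proof -
  have "(\<Sum>s\<in>A. (if s = r then 1 else 0) * f s) = (\<Sum>s\<in>A. if s = r then f s else 0)"
    by (rule sum.cong) auto
  also have "\<dots> = f r" using assms by (simp add: sum.delta)
  finally show ?thesis .
qed

lemma Idx_eq: "Idx l nn = Sigma {..<l} (\<lambda>i. {..<nn i})"
  by (auto simp: Idx_def)

lemma finite_Idx: "finite (Idx l nn)" by (simp add: Idx_eq)

lemma card_Idx: "card (Idx l nn) = (\<Sum>i<l. nn i)"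
  by (simp add: Idx_eq card_SigmaI)

lemma Fvec_bij:
  "bij_betw (\<lambda>x. restrict x (Idx l nn)) (Fvec l nn :: (nat \<times> nat \<Rightarrow> 'a::field) set)
     (Idx l nn \<rightarrow>\<^sub>E (UNIV::'a set))"
proof (rule bij_betwI')
  fix x y :: "nat \<times> nat \<Rightarrow> 'a" assume x: "x \<in> Fvec l nn" and y: "y \<in> Fvec l nn"
  show "(restrict x (Idx l nn) = restrict y (Idx l nn)) = (x = y)"
  proof
    assume e: "restrict x (Idx l nn) = restrict y (Idx l nn)"
    show "x = y"
    proof
      fix p show "x p = y p"
      proof (cases "p \<in> Idx l nn")
        case True then show ?thesis using fun_cong[OF e, of p] by simp
      next
        case False then show ?thesis using x y unfolding Fvec_def by (cases p) auto
      qed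
    qed
  qed simp
next
  fix x :: "nat \<times> nat \<Rightarrow> 'a" show "restrict x (Idx l nn) \<in> Idx l nn \<rightarrow>\<^sub>E UNIV" by simp
next
  fix g :: "nat \<times> nat \<Rightarrow> 'a" assume g: "g \<in> Idx l nn \<rightarrow>\<^sub>E UNIV"
  let ?x = "\<lambda>p. if p \<in> Idx l nn then g p else 0"
  have "?x \<in> Fvec l nn" by (simp add: Fvec_def)
  moreover have "g = restrict ?x (Idx l nn)"
  proof -
    have "restrict ?x (Idx l nn) = restrict g (Idx l nn)" by (rule restrict_ext) simp
    then show ?thesis using PiE_restrict[OF g] by simp
  qed
  ultimately show "\<exists>x\<in>Fvec l nn. g = restrict x (Idx l nn)" by blast
qed

lemma finite_Fvec: "finite (Fvec l nn :: (nat \<times> nat \<Rightarrow> 'a::{field,finite}) set)"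
proof -
  have b: "bij_betw (\<lambda>x. restrict x (Idx l nn)) (Fvec l nn :: (nat \<times> nat \<Rightarrow> 'a) set)
     (Idx l nn \<rightarrow>\<^sub>E (UNIV::'a set))" by (rule Fvec_bij)
  show ?thesis by (rule bij_betw_finite[OF b, THEN iffD2]) (simp add: finite_PiE finite_Idx)
qed

lemma card_Fvec: "card (Fvec l nn :: (nat \<times> nat \<Rightarrow> 'a::{field,finite}) set)
   = card (UNIV::'a set) ^ (\<Sum>i<l. nn i)"
  using bij_betw_same_card[OF Fvec_bij[of l nn]] finite_Idx[of l nn] by (simp add: card_PiE card_Idx)

lemma Fvec_sub: "Fsubspace (Fvec l nn :: (nat \<times> nat \<Rightarrow> 'a::field) set) UNIV"
  by (simp add: Fsubspace_def Fvec_def)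

lemma dual_sub: "Fsubspace (dual l nn C :: (nat \<times> nat \<Rightarrow> 'a::field) set) (Fvec l nn)"
  unfolding Fsubspace_def
proof (intro conjI ballI allI)
  show "dual l nn C \<subseteq> Fvec l nn" by (auto simp: dual_def)
  show "(\<lambda>p. 0) \<in> dual l nn C" by (simp add: dual_def Fvec_def)
next
  fix u v assume "u \<in> dual l nn C" "v \<in> dual l nn C"
  then show "(\<lambda>p. u p + v p) \<in> dual l nn C"
    by (simp add: dual_def Fvec_def distrib_right sum.distrib)
next
  fix c :: 'a and v assume "v \<in> dual l nn C"
  then show "(\<lambda>p. c * v p) \<in> dual l nn C"
    by (simp add: dual_def Fvec_def mult.assoc sum_distrib_left[symmetric])
qed

lemma card_UNIV_gt1: "card (UNIV::'a::{field,finite} set) > 1"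
proof -
  have "card {0::'a, 1} \<le> card (UNIV::'a set)" by (rule card_mono) auto
  then show ?thesis by simp
qed

lemma dual_card:
  fixes X :: "(nat \<times> nat \<Rightarrow> 'a::{field,finite}) set"
  assumes sub: "Fsubspace X (Fvec l nn)"
  shows "card (dual l nn X) * card X = card (Fvec l nn :: (nat \<times> nat \<Rightarrow> 'a) set)"
proof -
  define V where "V = (Fvec l nn :: (nat \<times> nat \<Rightarrow> 'a) set)"
  define I where "I = Idx l nn"
  define D where "D = dual l nn X"
  define ip where "ip x c = (\<Sum>p\<in>I. x p * c p)" for x c :: "nat \<times> nat \<Rightarrow> 'a"
  define q where "q = card (UNIV::'a set)"
  have finV: "finite V" by (simp add: V_def finite_Fvec)
  have subV: "Fsubspace V UNIV" by (simp add: V_def Fvec_sub)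
  have XV: "X \<subseteq> V" using sub by (simp add: Fsubspace_def V_def)
  have finX: "finite X" using finV XV finite_subset by blast
  have DV: "D \<subseteq> V" by (auto simp: D_def V_def dual_def)
  have finD: "finite D" using finV DV finite_subset by blast
  have finI: "finite I" by (simp add: I_def finite_Idx)
  have X0: "0 \<in> X" using Fsub_zero[OF sub] .
  have Dchar: "x \<in> D \<longleftrightarrow> x \<in> V \<and> (\<forall>c\<in>X. ip x c = 0)" for x
    by (simp add: D_def dual_def V_def ip_def I_def)
  have h1: "card V = card {x\<in>V. ip x c = 0} * q" if c: "c \<in> X - {0}" for c
  proof -
    have cV: "c \<in> V" using c XV by blast
    obtain p where p: "c p \<noteq> 0" using c by (auto simp: fun_eq_iff)
    have pI: "p \<in> I" using cV p unfolding V_def Fvec_def I_def by (cases p) auto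
    let ?x0 = "\<lambda>r. if r = p then (1::'a) else 0"
    have x0V: "?x0 \<in> V" using pI by (simp add: V_def Fvec_def I_def)
    have "ip ?x0 c = c p" unfolding ip_def by (rule sum_indicator_mult'[OF finI pI])
    then show ?thesis unfolding q_def
      by (intro functional_kernel[where S=V and U=UNIV and f="\<lambda>x. ip x c" and xz="?x0",
            OF subV finV _ _ x0V])
         (use p in \<open>simp_all add: ip_def distrib_right sum.distrib fscale_def sum_distrib_left mult.assoc\<close>)
  qed
  have h2: "card X = card {c\<in>X. ip x c = 0} * q" if x: "x \<in> V - D" for x
  proof -
    obtain c0 where c0: "c0 \<in> X" "ip x c0 \<noteq> 0" using x Dchar by blast
    show ?thesis unfolding q_def
      by (intro functional_kernel[where S=X and f="\<lambda>c. ip x c" and xz=c0, OF sub finX _ _ c0])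
         (simp_all add: ip_def distrib_left sum.distrib fscale_def sum_distrib_left mult_ac)
  qed
  define Z1 where "Z1 = Sigma X (\<lambda>c. {x\<in>V. ip x c = 0})"
  define Z2 where "Z2 = Sigma V (\<lambda>x. {c\<in>X. ip x c = 0})"
  have cZ1: "card Z1 = (\<Sum>c\<in>X. card {x\<in>V. ip x c = 0})"
    unfolding Z1_def using finX finV by (intro card_SigmaI) auto
  have cZ2: "card Z2 = (\<Sum>x\<in>V. card {c\<in>X. ip x c = 0})"
    unfolding Z2_def using finX finV by (intro card_SigmaI) auto
  have "Z2 = prod.swap ` Z1" by (auto simp: Z1_def Z2_def)
  then have c12: "card Z1 = card Z2" by (simp add: card_image)
  have "q * card Z1 = (\<Sum>c\<in>X. q * card {x\<in>V. ip x c = 0})"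
    by (simp add: cZ1 sum_distrib_left)
  also have "\<dots> = q * card {x\<in>V. ip x 0 = 0} + (\<Sum>c\<in>X - {0}. q * card {x\<in>V. ip x c = 0})"
    by (rule sum.remove[OF finX X0])
  also have "(\<Sum>c\<in>X - {0}. q * card {x\<in>V. ip x c = 0}) = (\<Sum>c\<in>X - {0}. card V)"
    by (rule sum.cong) (simp_all add: h1 mult.commute)
  also have "{x\<in>V. ip x 0 = 0} = V" by (simp add: ip_def)
  also have "(\<Sum>c\<in>X - {0}. card V) = (card X - 1) * card V"
    using finX X0 by simp
  finally have e1: "q * card Z1 = q * card V + (card X - 1) * card V" .
  have "q * card Z2 = (\<Sum>x\<in>V. q * card {c\<in>X. ip x c = 0})"
    by (simp add: cZ2 sum_distrib_left)
  also have "\<dots> = (\<Sum>x\<in>V - D. q * card {c\<in>X. ip x c = 0}) + (\<Sum>x\<in>D. q * card {c\<in>X. ip x c = 0})"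
    by (rule sum.subset_diff[OF DV finV])
  also have "(\<Sum>x\<in>V - D. q * card {c\<in>X. ip x c = 0}) = (\<Sum>x\<in>V - D. card X)"
    by (rule sum.cong) (simp_all add: h2 mult.commute)
  also have "(\<Sum>x\<in>D. q * card {c\<in>X. ip x c = 0}) = (\<Sum>x\<in>D. q * card X)"
  proof (rule sum.cong)
    fix x assume "x \<in> D"
    then have "{c\<in>X. ip x c = 0} = X" using Dchar by blast
    then show "q * card {c\<in>X. ip x c = 0} = q * card X" by simp
  qed simp
  finally have e2: "q * card Z2 = (card V - card D) * card X + card D * (q * card X)"
    using finV DV finD by (simp add: card_Diff_subset)
  have "q * card V + (card X - 1) * card V = q * card D * card X + (card V - card D) * card X"
    using e1 e2 c12 by (simp add: algebra_simps)
  moreover have "card X \<ge> 1" using finX X0 by (metis card_0_eq empty_iff less_one not_le)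
  moreover have "card D \<le> card V" using finV DV card_mono by blast
  moreover have "q > 1" unfolding q_def by (rule card_UNIV_gt1)
  ultimately have "card V = card D * card X" by (rule arith_dc)
  then show ?thesis by (simp add: V_def D_def)
qed

lemma PiL_add: "PiL l nn N A (\<lambda>p. x p + y p) = (\<lambda>p. PiL l nn N A x p + PiL l nn N A y p)"
  by (auto simp: PiL_def fun_eq_iff distrib_right sum.distrib)

lemma PiL_scale: "PiL l nn N A (\<lambda>p. c * x p) = (\<lambda>p. c * PiL l nn N A x p)"
  by (auto simp: PiL_def fun_eq_iff sum_distrib_left mult.assoc)

lemma PiL_plus: "PiL l nn N A (x + y) = PiL l nn N A x + PiL l nn N A y"
  using PiL_add[of l nn N A x y] by (simp add: plus_fun_def)

lemma PiL_minus: "PiL l nn N A (x - y) = PiL l nn N A x - PiL l nn N A y"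
  by (auto simp: PiL_def fun_eq_iff left_diff_distrib sum_subtractf)

lemma PiL_zero: "PiL l nn N A (\<lambda>p. 0) = (\<lambda>p. 0)"
  by (auto simp: PiL_def fun_eq_iff)

lemma PiL_eq0:
  "PiL l nn N A x = (\<lambda>p. 0) \<longleftrightarrow> (\<forall>i<l. \<forall>r<N i. (\<Sum>j<nn i. x (i, j) * A i r j) = 0)"
proof
  assume h: "PiL l nn N A x = (\<lambda>p. 0)"
  show "\<forall>i<l. \<forall>r<N i. (\<Sum>j<nn i. x (i, j) * A i r j) = 0"
  proof (intro allI impI)
    fix i r assume "i < l" "r < N i"
    then show "(\<Sum>j<nn i. x (i, j) * A i r j) = 0" using fun_cong[OF h, of "(i, r)"]
      by (simp add: PiL_def)
  qed
next
  assume "\<forall>i<l. \<forall>r<N i. (\<Sum>j<nn i. x (i, j) * A i r j) = 0"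
  then show "PiL l nn N A x = (\<lambda>p. 0)" by (auto simp: PiL_def fun_eq_iff)
qed

theorem mainTheorem4:
  fixes l :: nat and nn :: "nat \<Rightarrow> nat"
    and K :: "nat \<Rightarrow> ('a::{field,finite}) set"
    and m :: "nat \<Rightarrow> nat" and B :: "nat \<Rightarrow> nat \<Rightarrow> 'a"
    and C :: "(nat \<times> nat \<Rightarrow> 'a) set" and k :: nat
    and L :: "nat \<Rightarrow> (nat \<Rightarrow> 'a) set"
    and N :: "nat \<Rightarrow> nat" and A :: "nat \<Rightarrow> nat \<Rightarrow> nat \<Rightarrow> 'a"
  assumes "l \<ge> 1"
    and "\<forall>i<l. nn i \<ge> 1"
    and "\<forall>i<l. subfield (K i)"
    and "\<forall>i<l. is_Kbasis_F (K i) (B i) (m i)"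
    and "Fsubspace C (Fvec l nn)"
    and "Fdim C = k"
    and "\<forall>i<l. Ksubspace (K i) (nn i) (L i)"
    and "\<forall>i<l. is_gen_matrix (K i) (nn i) (L i) (N i) (A i)"
  shows "mu l nn K B m C L + rho l nn N A C = (\<Sum>i<l. nn i) - k"
proof -
  define q where "q = card (UNIV::'a set)"
  define n where "n = (\<Sum>i<l. nn i)"
  define V where "V = (Fvec l nn :: (nat \<times> nat \<Rightarrow> 'a) set)"
  define D where "D = dual l nn C"
  define P where "P = PiL l nn N A"
  have q1: "q > 1" unfolding q_def by (rule card_UNIV_gt1)
  have finV: "finite V" by (simp add: V_def finite_Fvec)
  have cV: "card V = q ^ n" by (simp add: V_def q_def n_def card_Fvec)
  have CV: "C \<subseteq> V" using assms(5) by (simp add: Fsubspace_def V_def)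
  have finC: "finite C" using CV finV finite_subset by blast
  have DV: "D \<subseteq> V" by (auto simp: D_def V_def dual_def)
  have finD: "finite D" using DV finV finite_subset by blast
  have subD: "Fsubspace D V" unfolding D_def V_def by (rule dual_sub)
  have cC: "card C = q ^ k" using card_Fdim[OF assms(5) finC] assms(6) by (simp add: q_def)
  have cD: "card D = q ^ Fdim D" using card_Fdim[OF subD finD] by (simp add: q_def)
  have "card D * card C = card V" unfolding D_def V_def by (rule dual_card[OF assms(5)])
  then have "q ^ (Fdim D + k) = q ^ n" by (simp add: cC cD cV power_add)
  then have dimD: "Fdim D + k = n" using q1 by (simp add: power_inject_exp)
  have CLeq: "CL l nn K B m C L = {x\<in>D. P x = (\<lambda>p. 0)}"
  proof (rule set_eqI)
    fix x
    have "(\<forall>i<l. supp_i K B m nn x i \<subseteq> Korth (K i) (nn i) (L i)) \<longleftrightarrow>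
          (\<forall>i<l. \<forall>r<N i. (\<Sum>j<nn i. x (i, j) * A i r j) = 0)"
    proof -
      have "supp_i K B m nn x i \<subseteq> Korth (K i) (nn i) (L i) \<longleftrightarrow>
            (\<forall>r<N i. (\<Sum>j<nn i. x (i, j) * A i r j) = 0)" if i: "i < l" for i
        unfolding supp_i_def
        using core_i[OF assms(3)[rule_format, OF i] assms(4)[rule_format, OF i]
            assms(8)[rule_format, OF i], of "block x i"]
        by (simp only: block_def)
      then show ?thesis by blast
    qed
    then show "x \<in> CL l nn K B m C L \<longleftrightarrow> x \<in> {x\<in>D. P x = (\<lambda>p. 0)}"
      by (simp add: CL_def D_def P_def PiL_eq0)
  qed
  have kc: "card D = card {x\<in>D. P x = 0} * card (P ` D)"
  proof (rule kernel_card[OF finD])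
    fix x y assume "x \<in> D" "y \<in> D"
    then show "x - y \<in> D \<and> x + y \<in> D" using Fsub_add[OF subD] Fsub_diff[OF subD] by blast
  next
    fix x y show "P (x + y) = P x + P y \<and> P (x - y) = P x - P y"
      by (simp add: P_def PiL_plus PiL_minus)
  qed
  have subK: "Fsubspace {x\<in>D. P x = (\<lambda>p. 0)} V"
    unfolding Fsubspace_def
  proof (intro conjI ballI allI)
    show "{x\<in>D. P x = (\<lambda>p. 0)} \<subseteq> V" using DV by blast
    show "(\<lambda>p. 0) \<in> {x\<in>D. P x = (\<lambda>p. 0)}"
      using subD by (simp add: Fsubspace_def P_def PiL_zero)
  next
    fix u v assume "u \<in> {x\<in>D. P x = (\<lambda>p. 0)}" "v \<in> {x\<in>D. P x = (\<lambda>p. 0)}"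
    then show "(\<lambda>p. u p + v p) \<in> {x\<in>D. P x = (\<lambda>p. 0)}"
      using subD by (simp add: Fsubspace_def P_def PiL_add)
  next
    fix c :: 'a and v assume "v \<in> {x\<in>D. P x = (\<lambda>p. 0)}"
    then show "(\<lambda>p. c * v p) \<in> {x\<in>D. P x = (\<lambda>p. 0)}"
      using subD by (simp add: Fsubspace_def P_def PiL_scale)
  qed
  have subI: "Fsubspace (P ` D) UNIV"
    unfolding Fsubspace_def
  proof (intro conjI ballI allI)
    show "P ` D \<subseteq> UNIV" by simp
    have "(\<lambda>p. 0) \<in> D" using subD by (simp add: Fsubspace_def)
    then show "(\<lambda>p. 0) \<in> P ` D" by (rule rev_image_eqI) (simp add: P_def PiL_zero)
  next
    fix u v assume "u \<in> P ` D" "v \<in> P ` D"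
    then obtain u' v' where "u' \<in> D" "v' \<in> D" "u = P u'" "v = P v'" by blast
    moreover have "(\<lambda>p. u' p + v' p) \<in> D" using subD calculation by (simp add: Fsubspace_def)
    ultimately show "(\<lambda>p. u p + v p) \<in> P ` D"
      by (intro rev_image_eqI[of "\<lambda>p. u' p + v' p"]) (simp_all add: P_def PiL_add)
  next
    fix c :: 'a and v assume "v \<in> P ` D"
    then obtain v' where "v' \<in> D" "v = P v'" by blast
    moreover have "(\<lambda>p. c * v' p) \<in> D" using subD calculation by (simp add: Fsubspace_def)
    ultimately show "(\<lambda>p. c * v p) \<in> P ` D"
      by (intro rev_image_eqI[of "\<lambda>p. c * v' p"]) (simp_all add: P_def PiL_scale)
  qed
  have finK: "finite {x\<in>D. P x = (\<lambda>p. 0)}" using finD by simp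
  have finI: "finite (P ` D)" using finD by simp
  have cK: "card {x\<in>D. P x = (\<lambda>p. 0)} = q ^ mu l nn K B m C L"
    using card_Fdim[OF subK finK] by (simp add: q_def mu_def CLeq)
  have cI: "card (P ` D) = q ^ rho l nn N A C"
    using card_Fdim[OF subI finI] by (simp add: q_def rho_def P_def D_def)
  have "q ^ Fdim D = q ^ (mu l nn K B m C L + rho l nn N A C)"
    using kc cK cI cD by (simp add: power_add zero_fun_def)
  then have "Fdim D = mu l nn K B m C L + rho l nn N A C" using q1 by (simp add: power_inject_exp)
  then show ?thesis using dimD n_def by simp
qed

end
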